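(* Let $f(x)=\kappa_1(x)_++\kappa_2(x)_-$ with $\kappa_2>\kappa_1>0$, where $(x)_+=\max(0,x)$ and $(x)_-=\min(0,x)$. For $d_t>0$, a state $s$, a scaled stock $c\in\mathbb{R}$, and a random future return $G_t(s,c)$ (integrable), define $V_t(s,c)\doteq\frac{1}{d_t}\Big(f^{-1}\big(\mathbb{E}[f(d_tc+d_tG_t(s,c))]\big)-d_tc\Big)$, and let $\Lambda=\frac{\kappa_2-\kappa_1}{\kappa_1}>0$. Then $V_t(s,c)\ge\mathbb{E}[G_t(s,c)]-\Lambda\,\mathbb{E}\big[|(c+G_t(s,c))_-|\big]$.
   Context: $f^{-1}$ denotes the inverse of the strictly increasing bijection $f:\mathbb{R}\to\mathbb{R}$. *)

theory Defs
  imports "HOL-Probability.Probability"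
begin

definition pospart :: "real \<Rightarrow> real" where "pospart x = max 0 x"
definition negpart :: "real \<Rightarrow> real" where "negpart x = min 0 x"

definition futil :: "real \<Rightarrow> real \<Rightarrow> real \<Rightarrow> real" where
  "futil k1 k2 x = k1 * pospart x + k2 * negpart x"

definition Vval :: "real \<Rightarrow> real \<Rightarrow> 'a measure \<Rightarrow> ('a \<Rightarrow> real) \<Rightarrow> real \<Rightarrow> real \<Rightarrow> real" where
  "Vval k1 k2 M G d c =
     (1 / d) * (inv (futil k1 k2) (\<integral>\<omega>. futil k1 k2 (d * c + d * G \<omega>) \<partial>M) - d * c)"

end

theory Submission
  imports Defs
begin

lemma futil_alt: "futil k1 k2 x = k1 * x + (k2 - k1) * negpart x"
  by (simp add: futil_def pospart_def negpart_def max_def min_def algebra_simps)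

lemma futil_inj:
  assumes "0 < k1" "k1 < k2"
  shows "inj (futil k1 k2)"
proof -
  have "strict_mono (futil k1 k2)"
  proof (rule strict_monoI)
    fix x y :: real assume "x < y"
    then show "futil k1 k2 x < futil k1 k2 y"
      using assms unfolding futil_def pospart_def negpart_def
      using mult_strict_left_mono[OF \<open>x < y\<close>, of k1] mult_strict_left_mono[OF \<open>x < y\<close>, of k2]
        mult_pos_neg[of k2 x] mult_pos_pos[of k1 y] mult_nonneg_nonpos[of k2 x] mult_nonneg_nonneg[of k1 y]
      apply (cases "x \<le> 0"; cases "y \<le> 0")
      apply (auto simp: max_def min_def)
      using mult_pos_pos[of k1 y] assms by linarith
  qed
  then show ?thesis by (rule strict_mono_imp_inj_on)
qed

lemma inv_futil_ge:
  assumes "0 < k1" "k1 < k2"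
  shows "inv (futil k1 k2) (k1 * z) \<ge> z"
proof (cases "z \<ge> 0")
  case True
  have "futil k1 k2 z = k1 * z" using True by (simp add: futil_def pospart_def negpart_def)
  then have "inv (futil k1 k2) (k1 * z) = z" using futil_inj[OF assms] by (metis inv_f_f)
  then show ?thesis by simp
next
  case False
  have "k1 * z \<le> 0" using False assms by (simp add: mult_nonneg_nonpos)
  then have "k1 * z / k2 \<le> 0" using assms by (simp add: divide_nonpos_pos)
  then have "futil k1 k2 (k1 * z / k2) = k1 * z" using assms
    by (simp add: futil_def pospart_def negpart_def)
  then have e: "inv (futil k1 k2) (k1 * z) = k1 * z / k2" using futil_inj[OF assms] by (metis inv_f_f)
  have "k1 * z / k2 \<ge> z" using False assms
    by (simp add: pos_le_divide_eq mult_right_mono_neg)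
  then show ?thesis using e by simp
qed

theorem mainTheorem6:
  fixes M :: "'a measure" and G :: "'a \<Rightarrow> real" and k1 k2 d c :: real
  assumes "prob_space M" and "integrable M G"
    and "0 < k1" and "k1 < k2" and "0 < d"
  shows "Vval k1 k2 M G d c \<ge>
           (\<integral>\<omega>. G \<omega> \<partial>M) - ((k2 - k1) / k1) * (\<integral>\<omega>. \<bar>negpart (c + G \<omega>)\<bar> \<partial>M)"
proof -
  interpret prob_space M by fact
  define N where "N = (\<lambda>w. negpart (c + G w))"
  have iN: "integrable M N" unfolding N_def negpart_def using assms(2) by auto
  have abs: "\<And>w. \<bar>negpart (c + G w)\<bar> = - N w" by (simp add: N_def negpart_def)
  have neg: "\<And>w. negpart (d * c + d * G w) = d * N w"
    using assms(5) by (simp add: N_def negpart_def min_mult_distrib_left distrib_left[symmetric])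
  have "(\<integral>\<omega>. futil k1 k2 (d * c + d * G \<omega>) \<partial>M)
      = (\<integral>\<omega>. k1 * d * c + k1 * d * G \<omega> + (k2 - k1) * d * N \<omega> \<partial>M)"
    by (rule Bochner_Integration.integral_cong) (simp_all only: futil_alt neg, simp add: algebra_simps)
  also have "\<dots> = k1 * d * c + k1 * d * (\<integral>\<omega>. G \<omega> \<partial>M) + (k2 - k1) * d * (\<integral>\<omega>. N \<omega> \<partial>M)"
    using assms(2) iN prob_space by simp
  also have "\<dots> = k1 * (d * c + d * ((\<integral>\<omega>. G \<omega> \<partial>M) + ((k2 - k1) / k1) * (\<integral>\<omega>. N \<omega> \<partial>M)))"
    using assms(3) by (simp add: field_simps)
  finally have E: "(\<integral>\<omega>. futil k1 k2 (d * c + d * G \<omega>) \<partial>M) = \<dots>" .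
  have "inv (futil k1 k2) (\<integral>\<omega>. futil k1 k2 (d * c + d * G \<omega>) \<partial>M) - d * c
     \<ge> d * ((\<integral>\<omega>. G \<omega> \<partial>M) + ((k2 - k1) / k1) * (\<integral>\<omega>. N \<omega> \<partial>M))"
    unfolding E using inv_futil_ge[OF assms(3,4)] by (smt (verit))
  then have "Vval k1 k2 M G d c \<ge> (\<integral>\<omega>. G \<omega> \<partial>M) + ((k2 - k1) / k1) * (\<integral>\<omega>. N \<omega> \<partial>M)"
    unfolding Vval_def using assms(5) by (simp add: field_simps)
  moreover have "(\<integral>\<omega>. \<bar>negpart (c + G \<omega>)\<bar> \<partial>M) = - (\<integral>\<omega>. N \<omega> \<partial>M)"
    unfolding abs by simp
  ultimately show ?thesis by simp
qed

end
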